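(* Let $X$ be a finite set, $b\in\mathbb{N}$, $(\varphi_i)_{i\in[1,b]}$ an individual bin evaluation, and $(X_1,\dots,X_\tau)$ a type partition of $X$. Let $X'\subseteq X$ and let $\vec p,\vec q\in\mathbb{N}_0^\tau$ be such that $|X_j\cap X'|\ge p_j$ and $|X_j\cap(X\setminus X')|\ge q_j$ for all $j\in[1,\tau]$. Then for every $i\in[1,b]$ there exist sets $X_{\vec p}\subseteq X'$ containing exactly $p_j$ elements of $X_j\cap X'$ for every $j$ and $X_{\vec q}\subseteq X\setminus X'$ containing exactly $q_j$ elements of $X_j\cap(X\setminus X')$ for every $j$, and the value $\varphi_i((X'\setminus X_{\vec p})\cup X_{\vec q})$ is the same for every such choice of $X_{\vec p}$ and $X_{\vec q}$ (so the type vector operation $\varphi_i((X'\setminus\vec p)\cup\vec q):=\varphi_i((X'\setminus X_{\vec p})\cup X_{\vec q})$ is well-defined).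
   Context: For integers $a\le b$, $[a,b]=\{i\in\mathbb{N}: a\le i\le b\}$. Fix $\mathrm{inf}\in\{\infty,-\infty\}$. An individual bin evaluation is a $b$-tuple $(\varphi_i)_{i\in[1,b]}$ of functions $\varphi_i:2^X\to\mathbb{Z}\cup\{\mathrm{inf}\}$. Two elements $x,y\in X$ are target equivalent if for every $i\in[1,b]$ and every $A\subseteq X$ with $\{x,y\}\cap A=\{x\}$ we have $\varphi_i((A\setminus\{x\})\cup\{y\})=\varphi_i(A)$. A type partition of $X$ is a tuple $(X_1,\dots,X_\tau)$ of pairwise disjoint sets with union $X$ such that the elements of each $X_j$ are pairwise target equivalent. *)

theory Defs
  imports Complex_Main "HOL-Library.Extended_Real"
begin

definition individual_bin_evaluation ::
  "'a set \<Rightarrow> nat \<Rightarrow> ereal \<Rightarrow> (nat \<Rightarrow> 'a set \<Rightarrow> ereal) \<Rightarrow> bool" where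
  "individual_bin_evaluation X b infv \<phi> \<longleftrightarrow>
     infv \<in> {\<infinity>, -\<infinity>} \<and>
     (\<forall>i\<in>{1..b}. \<forall>A. A \<subseteq> X \<longrightarrow> \<phi> i A \<in> {ereal (real_of_int k) | k. True} \<union> {infv})"

definition target_equivalent ::
  "'a set \<Rightarrow> nat \<Rightarrow> (nat \<Rightarrow> 'a set \<Rightarrow> ereal) \<Rightarrow> 'a \<Rightarrow> 'a \<Rightarrow> bool" where
  "target_equivalent X b \<phi> x y \<longleftrightarrow>
     (\<forall>i\<in>{1..b}. \<forall>A. A \<subseteq> X \<longrightarrow> {x, y} \<inter> A = {x} \<longrightarrow>
        \<phi> i ((A - {x}) \<union> {y}) = \<phi> i A)"

definition type_partition ::
  "'a set \<Rightarrow> nat \<Rightarrow> (nat \<Rightarrow> 'a set \<Rightarrow> ereal) \<Rightarrow> nat \<Rightarrow> (nat \<Rightarrow> 'a set) \<Rightarrow> bool" where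
  "type_partition X b \<phi> \<tau> Xs \<longleftrightarrow>
     (\<forall>j\<in>{1..\<tau>}. \<forall>k\<in>{1..\<tau>}. j \<noteq> k \<longrightarrow> Xs j \<inter> Xs k = {}) \<and>
     (\<Union>j\<in>{1..\<tau>}. Xs j) = X \<and>
     (\<forall>j\<in>{1..\<tau>}. \<forall>x\<in>Xs j. \<forall>y\<in>Xs j. target_equivalent X b \<phi> x y)"

definition type_selection :: "nat \<Rightarrow> (nat \<Rightarrow> 'a set) \<Rightarrow> 'a set \<Rightarrow> (nat \<Rightarrow> nat) \<Rightarrow> 'a set \<Rightarrow> bool" where
  "type_selection \<tau> Xs Y c S \<longleftrightarrow>
     S \<subseteq> Y \<and> (\<forall>j\<in>{1..\<tau>}. card (Xs j \<inter> Y \<inter> S) = c j)"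

end

theory Submission
  imports Defs
begin

lemma tp_sub: "type_partition X b \<phi> \<tau> Xs \<Longrightarrow> j \<in> {1..\<tau>} \<Longrightarrow> Xs j \<subseteq> X"
  unfolding type_partition_def by blast

lemma swap_card:
  assumes "finite A" "x \<in> A" "y \<notin> A" "x \<in> S \<longleftrightarrow> y \<in> S"
  shows "card (S \<inter> (A - {x} \<union> {y})) = card (S \<inter> A)"
proof (cases "x \<in> S")
  case True
  then have "S \<inter> (A - {x} \<union> {y}) = insert y (S \<inter> A - {x})" using assms by auto
  then show ?thesis using assms True
  proof -
    have "x \<in> S \<inter> A" using True assms by blast
    moreover have "finite (S \<inter> A)" using assms by simp
    ultimately have "card (S \<inter> A) > 0" by (simp add: card_gt_0_iff) blast
    then show ?thesis using assms True \<open>x \<in> S \<inter> A\<close> \<open>finite (S \<inter> A)\<close>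
      by (simp add: card_Diff_singleton Int_Diff[symmetric])
  qed
next
  case False
  then have "S \<inter> (A - {x} \<union> {y}) = S \<inter> A" using assms by auto
  then show ?thesis by simp
qed

lemma key:
  assumes fin: "finite X" and tp: "type_partition X b \<phi> \<tau> Xs" and i: "i \<in> {1..b}"
  shows "\<And>A. A \<subseteq> X \<Longrightarrow> B \<subseteq> X \<Longrightarrow> card (A - B) = n \<Longrightarrow>
     (\<forall>j\<in>{1..\<tau>}. card (Xs j \<inter> A) = card (Xs j \<inter> B)) \<Longrightarrow> \<phi> i A = \<phi> i B"
proof (induction n)
  case 0
  then have "A \<subseteq> B" using fin by (meson Diff_eq_empty_iff card_0_eq finite_Diff finite_subset)
  moreover have "B \<subseteq> A"
  proof
    fix y assume y: "y \<in> B"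
    then obtain j where j: "j \<in> {1..\<tau>}" "y \<in> Xs j" using tp 0 unfolding type_partition_def by blast
    have fB: "finite (Xs j \<inter> B)" using fin 0 finite_subset by blast
    have "Xs j \<inter> A \<subseteq> Xs j \<inter> B" using \<open>A \<subseteq> B\<close> by blast
    moreover have "card (Xs j \<inter> A) = card (Xs j \<inter> B)" using 0 j by blast
    ultimately have "Xs j \<inter> A = Xs j \<inter> B" using fB by (simp add: card_subset_eq)
    then show "y \<in> A" using y j by blast
  qed
  ultimately show ?case by simp
next
  case (Suc n)
  then obtain x where x: "x \<in> A" "x \<notin> B" by (metis card.empty Diff_iff equals0I nat.distinct(1))
  then obtain j where j: "j \<in> {1..\<tau>}" "x \<in> Xs j" using tp Suc.prems unfolding type_partition_def by blast
  have fA: "finite (Xs j \<inter> A)" and fB: "finite (Xs j \<inter> B)"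
    using fin Suc.prems finite_subset by blast+
  have "\<not> (Xs j \<inter> B \<subseteq> Xs j \<inter> A)"
  proof
    assume "Xs j \<inter> B \<subseteq> Xs j \<inter> A"
    moreover have "card (Xs j \<inter> A) = card (Xs j \<inter> B)" using Suc.prems j by blast
    ultimately have "Xs j \<inter> B = Xs j \<inter> A" using fA by (simp add: card_subset_eq)
    then show False using x j by blast
  qed
  then obtain y where y: "y \<in> Xs j" "y \<in> B" "y \<notin> A" by blast
  define A' where "A' = A - {x} \<union> {y}"
  have te: "target_equivalent X b \<phi> x y" using tp j y unfolding type_partition_def by blast
  have eq1: "\<phi> i A' = \<phi> i A"
    using te i Suc.prems x y unfolding target_equivalent_def A'_def by blast
  have A'X: "A' \<subseteq> X" using Suc.prems y unfolding A'_def by blast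
  have finA: "finite A" using fin Suc.prems finite_subset by blast
  have "A' - B = (A - B) - {x}" unfolding A'_def using x y by blast
  then have c: "card (A' - B) = n" using Suc.prems x by simp
  have cnt: "\<forall>k\<in>{1..\<tau>}. card (Xs k \<inter> A') = card (Xs k \<inter> B)"
  proof
    fix k assume k: "k \<in> {1..\<tau>}"
    have "x \<in> Xs k \<longleftrightarrow> y \<in> Xs k"
    proof (cases "k = j")
      case False
      then have "Xs j \<inter> Xs k = {}" using tp k j unfolding type_partition_def by blast
      then show ?thesis using x j y by blast
    qed (use j y in auto)
    then have "card (Xs k \<inter> A') = card (Xs k \<inter> A)"
      unfolding A'_def using swap_card[OF finA x(1) y(3)] by blast
    then show "card (Xs k \<inter> A') = card (Xs k \<inter> B)" using Suc.prems k by simp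
  qed
  have "\<phi> i A' = \<phi> i B" using Suc.IH[OF A'X Suc.prems(2) c cnt] .
  then show ?case using eq1 by simp
qed

lemma exists_sel:
  assumes fin: "finite X" and tp: "type_partition X b \<phi> \<tau> Xs" and "Y \<subseteq> X"
    and c: "\<forall>j\<in>{1..\<tau>}. card (Xs j \<inter> Y) \<ge> c j"
  shows "\<exists>S. type_selection \<tau> Xs Y c S"
proof -
  have "\<forall>j\<in>{1..\<tau>}. \<exists>T. T \<subseteq> Xs j \<inter> Y \<and> card T = c j"
    using c by (metis obtain_subset_with_card_n)
  then obtain T where T: "\<And>j. j\<in>{1..\<tau>} \<Longrightarrow> T j \<subseteq> Xs j \<inter> Y \<and> card (T j) = c j" by metis
  define S where "S = (\<Union>j\<in>{1..\<tau>}. T j)"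
  have "S \<subseteq> Y" using T unfolding S_def by blast
  moreover have "\<forall>j\<in>{1..\<tau>}. Xs j \<inter> Y \<inter> S = T j"
  proof
    fix j assume j: "j \<in> {1..\<tau>}"
    show "Xs j \<inter> Y \<inter> S = T j"
    proof
      show "T j \<subseteq> Xs j \<inter> Y \<inter> S" using T j unfolding S_def by blast
      show "Xs j \<inter> Y \<inter> S \<subseteq> T j"
      proof
        fix z assume z: "z \<in> Xs j \<inter> Y \<inter> S"
        then obtain k where k: "k \<in> {1..\<tau>}" "z \<in> T k" unfolding S_def by blast
        have "k = j"
        proof (rule ccontr)
          assume "k \<noteq> j"
          then have "Xs j \<inter> Xs k = {}" using tp k j unfolding type_partition_def by blast
          then show False using z k T[OF k(1)] by blast
        qed
        then show "z \<in> T j" using k by simp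
      qed
    qed
  qed
  ultimately show ?thesis unfolding type_selection_def using T by auto
qed

lemma count_sel:
  assumes fin: "finite X" and tp: "type_partition X b \<phi> \<tau> Xs" and X': "X' \<subseteq> X"
    and sp: "type_selection \<tau> Xs X' p Xp" and sq: "type_selection \<tau> Xs (X - X') q Xq"
    and j: "j \<in> {1..\<tau>}"
  shows "card (Xs j \<inter> ((X' - Xp) \<union> Xq)) = (card (Xs j \<inter> X') - p j) + q j"
proof -
  have sub: "Xp \<subseteq> X'" "Xq \<subseteq> X - X'" using sp sq unfolding type_selection_def by auto
  have e: "Xs j \<inter> ((X' - Xp) \<union> Xq) = ((Xs j \<inter> X') - (Xs j \<inter> X' \<inter> Xp)) \<union> (Xs j \<inter> (X - X') \<inter> Xq)"
    using sub by blast
  have f1: "finite (Xs j \<inter> X')" using fin X' finite_subset by blast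
  have f2: "finite (Xs j \<inter> (X - X') \<inter> Xq)" using fin finite_subset by blast
  have "card (((Xs j \<inter> X') - (Xs j \<inter> X' \<inter> Xp)) \<union> (Xs j \<inter> (X - X') \<inter> Xq))
     = card ((Xs j \<inter> X') - (Xs j \<inter> X' \<inter> Xp)) + card (Xs j \<inter> (X - X') \<inter> Xq)"
    by (rule card_Un_disjoint) (use f1 f2 in auto)
  also have "card ((Xs j \<inter> X') - (Xs j \<inter> X' \<inter> Xp)) = card (Xs j \<inter> X') - card (Xs j \<inter> X' \<inter> Xp)"
    by (rule card_Diff_subset) (use f1 in auto)
  finally show ?thesis using e sp sq j unfolding type_selection_def by simp
qed

theorem proposition8:
  fixes X X' :: "'a set" and b \<tau> :: nat and infv :: ereal
    and \<phi> :: "nat \<Rightarrow> 'a set \<Rightarrow> ereal" and Xs :: "nat \<Rightarrow> 'a set"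
    and p q :: "nat \<Rightarrow> nat"
  assumes "finite X"
    and "individual_bin_evaluation X b infv \<phi>"
    and "type_partition X b \<phi> \<tau> Xs"
    and "X' \<subseteq> X"
    and "\<forall>j\<in>{1..\<tau>}. card (Xs j \<inter> X') \<ge> p j"
    and "\<forall>j\<in>{1..\<tau>}. card (Xs j \<inter> (X - X')) \<ge> q j"
  shows "\<forall>i\<in>{1..b}.
     (\<exists>Xp Xq. type_selection \<tau> Xs X' p Xp \<and> type_selection \<tau> Xs (X - X') q Xq) \<and>
     (\<forall>Xp Xq Xp' Xq'.
        type_selection \<tau> Xs X' p Xp \<and> type_selection \<tau> Xs (X - X') q Xq \<and>
        type_selection \<tau> Xs X' p Xp' \<and> type_selection \<tau> Xs (X - X') q Xq' \<longrightarrow>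
        \<phi> i ((X' - Xp) \<union> Xq) = \<phi> i ((X' - Xp') \<union> Xq'))"
proof (intro ballI conjI allI impI)
  fix i assume i: "i \<in> {1..b}"
  obtain Xp where "type_selection \<tau> Xs X' p Xp" using exists_sel[OF assms(1,3,4,5)] by blast
  moreover obtain Xq where "type_selection \<tau> Xs (X - X') q Xq"
    using exists_sel[OF assms(1,3) _ assms(6)] by blast
  ultimately show "\<exists>Xp Xq. type_selection \<tau> Xs X' p Xp \<and> type_selection \<tau> Xs (X - X') q Xq" by blast
next
  fix i Xp Xq Xp' Xq' assume i: "i \<in> {1..b}" and H: "type_selection \<tau> Xs X' p Xp \<and> type_selection \<tau> Xs (X - X') q Xq \<and>
        type_selection \<tau> Xs X' p Xp' \<and> type_selection \<tau> Xs (X - X') q Xq'"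
  have s: "Xq \<subseteq> X - X'" "Xq' \<subseteq> X - X'" using H unfolding type_selection_def by auto
  show "\<phi> i ((X' - Xp) \<union> Xq) = \<phi> i ((X' - Xp') \<union> Xq')"
  proof (rule key[OF assms(1,3) i])
    show "X' - Xp \<union> Xq \<subseteq> X" "X' - Xp' \<union> Xq' \<subseteq> X" using s assms(4) by auto
    show "\<forall>j\<in>{1..\<tau>}. card (Xs j \<inter> (X' - Xp \<union> Xq)) = card (Xs j \<inter> (X' - Xp' \<union> Xq'))"
      using count_sel[OF assms(1,3,4)] H by metis
  qed (rule refl)
qed

end
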